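(* Let $n\ge k$, $s\ge t \ge 0$ and $1\le \ell \le k-1$ be integers. Suppose that $\mathcal{H} \subset EM(n,k,s,t)$ and $|\mathcal{H}| = m$. Then $|\partial_{\ell}\mathcal{H}|\ge |\partial_{\ell} L_{m}EM(n,k,s,t)|$.
   Context: $[n]=\{1,\dots,n\}$, $\binom{[n]}{k}$ is the family of $k$-subsets of $[n]$. For $0\le t\le\min\{k,s\}$, $EM(n,k,s,t)=\{A\in\binom{[n]}{k}: |A\cap[s]|\ge t\}$; $EM(n,k,s,t)=\emptyset$ if $t>\min\{k,s\}$, and $=\binom{[n]}{k}$ if $n\le s$. $\partial_\ell\mathcal{H}=\{A\in\binom{[n]}{k-\ell}: A\subset B\text{ for some }B\in\mathcal{H}\}$. Colex order: $A\prec B$ iff $\max\big((A\setminus B)\cup(B\setminus A)\big)\in B$; $L_m\mathcal{F}$ is the set of the first $m$ members of $\mathcal{F}$ in colex order. *)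

theory Defs
  imports Main
begin

definition ksubsets :: "nat \<Rightarrow> nat \<Rightarrow> nat set set" where
  "ksubsets n k = {A. A \<subseteq> {1..n} \<and> card A = k}"

definition EM :: "nat \<Rightarrow> nat \<Rightarrow> nat \<Rightarrow> nat \<Rightarrow> nat set set" where
  "EM n k s t = {A \<in> ksubsets n k. card (A \<inter> {1..s}) \<ge> t}"

definition shadow :: "nat \<Rightarrow> nat \<Rightarrow> nat set set \<Rightarrow> nat set set" where
  "shadow k l H = {A. finite A \<and> card A = k - l \<and> (\<exists>B\<in>H. A \<subseteq> B)}"

definition colex_less :: "nat set \<Rightarrow> nat set \<Rightarrow> bool" where
  "colex_less A B \<longleftrightarrow> A \<noteq> B \<and> Max ((A - B) \<union> (B - A)) \<in> B"

definition colex_initial :: "nat \<Rightarrow> nat set set \<Rightarrow> nat set set" where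
  "colex_initial m F = {A \<in> F. card {B \<in> F. colex_less B A} < m}"

end

theory Submission
  imports Defs
begin


lemma colex_char:
  assumes "finite A" "finite B"
  shows "colex_less A B \<longleftrightarrow> (\<exists>m. m \<in> B \<and> m \<notin> A \<and> (\<forall>y>m. y \<in> A \<longleftrightarrow> y \<in> B))"
proof
  assume h: "colex_less A B"
  let ?S = "(A - B) \<union> (B - A)"
  have ne: "?S \<noteq> {}" using h unfolding colex_less_def by auto
  have fin: "finite ?S" using assms by auto
  have mB: "Max ?S \<in> B" using h unfolding colex_less_def by auto
  have mS: "Max ?S \<in> ?S" using Max_in[OF fin ne] .
  have "\<forall>y>Max ?S. y \<in> A \<longleftrightarrow> y \<in> B"
  proof (intro allI impI)
    fix y assume "Max ?S < y"
    then have "y \<notin> ?S" using Max_ge[OF fin] by (meson leD)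
    then show "y \<in> A \<longleftrightarrow> y \<in> B" by auto
  qed
  then show "\<exists>m. m \<in> B \<and> m \<notin> A \<and> (\<forall>y>m. y \<in> A \<longleftrightarrow> y \<in> B)"
    using mB mS by blast
next
  assume "\<exists>m. m \<in> B \<and> m \<notin> A \<and> (\<forall>y>m. y \<in> A \<longleftrightarrow> y \<in> B)"
  then obtain m where m: "m \<in> B" "m \<notin> A" "\<forall>y>m. y \<in> A \<longleftrightarrow> y \<in> B" by blast
  let ?S = "(A - B) \<union> (B - A)"
  have fin: "finite ?S" using assms by auto
  have "Max ?S = m"
  proof (rule Max_eqI[OF fin])
    fix y assume "y \<in> ?S" then show "y \<le> m" using m(3) by (meson Diff_iff UnE not_le_imp_less)
  next
    show "m \<in> ?S" using m by auto
  qed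
  then show "colex_less A B" unfolding colex_less_def using m by auto
qed

lemma colex_irrefl: "\<not> colex_less A A"
  unfolding colex_less_def by auto

lemma colex_asym:
  assumes "finite A" "finite B" "colex_less A B" shows "\<not> colex_less B A"
proof
  assume h: "colex_less B A"
  let ?S = "(A - B) \<union> (B - A)"
  have fin: "finite ?S" using assms by auto
  have ne: "?S \<noteq> {}" using assms(3) unfolding colex_less_def by auto
  have "Max ?S \<in> ?S" using Max_in[OF fin ne] .
  moreover have "Max ?S \<in> A" "Max ?S \<in> B" using h assms(3) unfolding colex_less_def
    by (auto simp: Un_commute)
  ultimately show False by auto
qed

lemma colex_total:
  assumes "finite A" "finite B" "A \<noteq> B" shows "colex_less A B \<or> colex_less B A"
proof -
  let ?S = "(A - B) \<union> (B - A)"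
  have fin: "finite ?S" using assms by auto
  have ne: "?S \<noteq> {}" using assms(3) by auto
  have "Max ?S \<in> ?S" using Max_in[OF fin ne] .
  then show ?thesis unfolding colex_less_def using assms(3) by (auto simp: Un_commute)
qed

lemma colex_trans:
  assumes "finite A" "finite B" "finite C" "colex_less A B" "colex_less B C"
  shows "colex_less A C"
proof -
  obtain m1 where m1: "m1 \<in> B" "m1 \<notin> A" "\<forall>y>m1. y \<in> A \<longleftrightarrow> y \<in> B"
    using assms(4) colex_char[OF assms(1,2)] by blast
  obtain m2 where m2: "m2 \<in> C" "m2 \<notin> B" "\<forall>y>m2. y \<in> B \<longleftrightarrow> y \<in> C"
    using assms(5) colex_char[OF assms(2,3)] by blast
  have "m1 \<noteq> m2" using m1 m2 by auto
  then consider "m1 < m2" | "m2 < m1" by linarith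
  then show ?thesis
  proof cases
    case 1
    have "m2 \<in> C \<and> m2 \<notin> A \<and> (\<forall>y>m2. y \<in> A \<longleftrightarrow> y \<in> C)"
      using 1 m1 m2 by (meson less_trans)
    then show ?thesis using colex_char[OF assms(1,3)] by blast
  next
    case 2
    have "m1 \<in> C \<and> m1 \<notin> A \<and> (\<forall>y>m1. y \<in> A \<longleftrightarrow> y \<in> C)"
      using 2 m1 m2 by (meson less_trans)
    then show ?thesis using colex_char[OF assms(1,3)] by blast
  qed
qed



definition initial :: "nat set set \<Rightarrow> nat set set \<Rightarrow> bool" where
  "initial I F \<longleftrightarrow> I \<subseteq> F \<and> (\<forall>A\<in>I. \<forall>B\<in>F. colex_less B A \<longrightarrow> B \<in> I)"

lemma pred_psubset:
  assumes "finite F" "\<forall>X\<in>F. finite X" "A \<in> F" "B \<in> F" "colex_less B A"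
  shows "{C \<in> F. colex_less C B} \<subset> {C \<in> F. colex_less C A}"
proof -
  have "{C \<in> F. colex_less C B} \<subseteq> {C \<in> F. colex_less C A}"
  proof
    fix C assume "C \<in> {C \<in> F. colex_less C B}"
    then have "C \<in> F" "colex_less C B" by auto
    then show "C \<in> {C \<in> F. colex_less C A}"
      using colex_trans[of C B A] assms by auto
  qed
  moreover have "B \<in> {C \<in> F. colex_less C A} - {C \<in> F. colex_less C B}"
    using assms colex_irrefl by auto
  ultimately show ?thesis by blast
qed

lemma pred_card_less:
  assumes "finite F" "\<forall>X\<in>F. finite X" "A \<in> F" "B \<in> F" "colex_less B A"
  shows "card {C \<in> F. colex_less C B} < card {C \<in> F. colex_less C A}"
  using pred_psubset[OF assms] assms(1) by (intro psubset_card_mono) auto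

lemma L_mono: "a \<le> b \<Longrightarrow> colex_initial a F \<subseteq> colex_initial b F"
  unfolding colex_initial_def by auto

lemma L_subset: "colex_initial a F \<subseteq> F"
  unfolding colex_initial_def by auto

lemma initial_L:
  assumes "finite F" "\<forall>X\<in>F. finite X"
  shows "initial (colex_initial m F) F"
  unfolding initial_def
proof (intro conjI L_subset ballI impI)
  fix A B assume A: "A \<in> colex_initial m F" and B: "B \<in> F" and BA: "colex_less B A"
  have AF: "A \<in> F" using A L_subset by auto
  have "card {C \<in> F. colex_less C B} < card {C \<in> F. colex_less C A}"
    using pred_card_less[OF assms AF B BA] .
  then show "B \<in> colex_initial m F" using A B unfolding colex_initial_def by auto
qed

lemma initial_eq_L:
  assumes "finite F" "\<forall>X\<in>F. finite X" "initial I F"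
  shows "I = colex_initial (card I) F"
proof (intro set_eqI iffI)
  have IF: "I \<subseteq> F" using assms(3) unfolding initial_def by auto
  have finI: "finite I" using IF assms(1) finite_subset by auto
  fix A
  { assume A: "A \<in> I"
    have "{C \<in> F. colex_less C A} \<subseteq> I - {A}"
      using assms(3) A colex_irrefl unfolding initial_def by auto
    then have "card {C \<in> F. colex_less C A} \<le> card (I - {A})"
      using finI by (intro card_mono) auto
    also have "\<dots> < card I" using finI A by (metis card_Diff1_less)
    finally show "A \<in> colex_initial (card I) F" unfolding colex_initial_def using A IF by auto }
  { assume A: "A \<in> colex_initial (card I) F"
    then have AF: "A \<in> F" unfolding colex_initial_def by auto
    show "A \<in> I"
    proof (rule ccontr)
      assume nA: "A \<notin> I"
      have "I \<subseteq> {C \<in> F. colex_less C A}"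
      proof
        fix C assume C: "C \<in> I"
        have "C \<noteq> A" using C nA by auto
        moreover have "\<not> colex_less A C" using assms(3) C nA AF unfolding initial_def by auto
        ultimately have "colex_less C A" using colex_total[of C A] IF C AF assms(2) by auto
        then show "C \<in> {C \<in> F. colex_less C A}" using C IF by auto
      qed
      then have "card I \<le> card {C \<in> F. colex_less C A}"
        using assms(1) by (intro card_mono) auto
      then show False using A unfolding colex_initial_def by auto
    qed }
qed

lemma card_L:
  assumes "finite F" "\<forall>X\<in>F. finite X" "m \<le> card F"
  shows "card (colex_initial m F) = m"
proof -
  define \<phi> where "\<phi> A = card {C \<in> F. colex_less C A}" for A
  have inj: "inj_on \<phi> F"
  proof (rule inj_onI)
    fix A B assume AB: "A \<in> F" "B \<in> F" "\<phi> A = \<phi> B"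
    show "A = B"
    proof (rule ccontr)
      assume "A \<noteq> B"
      then have "colex_less A B \<or> colex_less B A" using colex_total AB assms(2) by auto
      then show False
      proof
        assume "colex_less A B"
        then have "\<phi> A < \<phi> B" unfolding \<phi>_def using pred_card_less[OF assms(1,2)] AB by blast
        then show False using AB(3) by simp
      next
        assume "colex_less B A"
        then have "\<phi> B < \<phi> A" unfolding \<phi>_def using pred_card_less[OF assms(1,2)] AB by blast
        then show False using AB(3) by simp
      qed
    qed
  qed
  have sub: "\<phi> ` F \<subseteq> {..<card F}"
  proof
    fix y assume "y \<in> \<phi> ` F"
    then obtain A where A: "A \<in> F" "y = \<phi> A" by auto
    have "{C \<in> F. colex_less C A} \<subseteq> F - {A}" using colex_irrefl by auto
    then have "\<phi> A \<le> card (F - {A})" unfolding \<phi>_def using assms(1) by (intro card_mono) auto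
    also have "\<dots> < card F" using assms(1) A by (metis card_Diff1_less)
    finally show "y \<in> {..<card F}" using A by auto
  qed
  have eq: "\<phi> ` F = {..<card F}"
  proof (rule card_subset_eq[OF _ sub])
    show "finite {..<card F}" by simp
    show "card (\<phi> ` F) = card {..<card F}" using card_image[OF inj] by simp
  qed
  have "colex_initial m F = {A \<in> F. \<phi> A < m}" unfolding colex_initial_def \<phi>_def by auto
  then have "\<phi> ` colex_initial m F = \<phi> ` F \<inter> {..<m}" by auto
  also have "\<dots> = {..<m}" using eq assms(3) by auto
  finally have "card (\<phi> ` colex_initial m F) = m" by simp
  moreover have "inj_on \<phi> (colex_initial m F)" using inj L_subset inj_on_subset by blast
  ultimately show ?thesis using card_image[of \<phi> "colex_initial m F"] by simp
qed



definition Efam :: "nat set \<Rightarrow> nat \<Rightarrow> nat \<Rightarrow> nat \<Rightarrow> nat set set" where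
  "Efam G k s t = {A. A \<subseteq> G \<and> card A = k \<and> t \<le> card (A \<inter> {1..s})}"

definition shL :: "nat \<Rightarrow> nat set set \<Rightarrow> nat set set" where
  "shL l F = {A. \<exists>B\<in>F. A \<subseteq> B \<and> card A + l = card B}"

definition gshifted :: "nat \<Rightarrow> nat set set \<Rightarrow> bool" where
  "gshifted g H \<longleftrightarrow> (\<forall>A\<in>H. \<forall>x\<in>A. g \<notin> A \<longrightarrow> insert g (A - {x}) \<in> H)"

definition sf :: "nat \<Rightarrow> nat \<Rightarrow> nat set set \<Rightarrow> nat set \<Rightarrow> nat set" where
  "sf g x H A = (if x \<in> A \<and> g \<notin> A \<and> insert g (A - {x}) \<notin> H then insert g (A - {x}) else A)"

definition shiftS :: "nat \<Rightarrow> nat \<Rightarrow> nat set set \<Rightarrow> nat set set" where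
  "shiftS g x H = sf g x H ` H"

lemma shL_sub_Pow: "shL l F \<subseteq> Pow (\<Union>F)"
  unfolding shL_def by auto

lemma shL_finite: "finite F \<Longrightarrow> \<forall>B\<in>F. finite B \<Longrightarrow> finite (shL l F)"
  using shL_sub_Pow[of l F] by (meson finite_Pow_iff finite_Union finite_subset)

lemma shL_mono: "F \<subseteq> F' \<Longrightarrow> shL l F \<subseteq> shL l F'"
  unfolding shL_def by auto

lemma shL_0: "\<forall>B\<in>F. finite B \<Longrightarrow> shL 0 F = F"
  unfolding shL_def by (auto dest: card_subset_eq)

lemma sf_inj:
  assumes "g \<noteq> x" shows "inj_on (sf g x H) H"
proof (rule inj_onI)
  fix A B assume A: "A \<in> H" and B: "B \<in> H" and eq: "sf g x H A = sf g x H B"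
  show "A = B"
  proof (cases "x \<in> A \<and> g \<notin> A \<and> insert g (A - {x}) \<notin> H")
    case T1: True
    show ?thesis
    proof (cases "x \<in> B \<and> g \<notin> B \<and> insert g (B - {x}) \<notin> H")
      case True
      have "sf g x H B = insert g (B - {x})" using True unfolding sf_def by auto
      moreover have "sf g x H A = insert g (A - {x})" using T1 unfolding sf_def by auto
      ultimately have "insert g (A - {x}) = insert g (B - {x})" using eq by simp
      moreover have "g \<notin> A - {x}" "g \<notin> B - {x}" using T1 True by auto
      ultimately have "A - {x} = B - {x}" by (metis Diff_insert_absorb)
      note e = this
      have "A = insert x (A - {x})" using T1 by (intro insert_Diff[symmetric]) auto
      also have "\<dots> = insert x (B - {x})" using e by (rule arg_cong)
      also have "\<dots> = B" using True by (intro insert_Diff) auto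
      finally show ?thesis .
    next
      case False
      have "sf g x H B = B" using False unfolding sf_def by auto
      moreover have "sf g x H A = insert g (A - {x})" using T1 unfolding sf_def by auto
      ultimately have "insert g (A - {x}) = B" using eq by simp
      then show ?thesis using T1 B by auto
    qed
  next
    case F1: False
    show ?thesis
    proof (cases "x \<in> B \<and> g \<notin> B \<and> insert g (B - {x}) \<notin> H")
      case True
      have "sf g x H A = A" using F1 unfolding sf_def by auto
      moreover have "sf g x H B = insert g (B - {x})" using True unfolding sf_def by auto
      ultimately have "A = insert g (B - {x})" using eq by simp
      then show ?thesis using True A by auto
    next
      case False
      have "sf g x H A = A" using F1 unfolding sf_def by auto
      moreover have "sf g x H B = B" using False unfolding sf_def by auto
      ultimately show ?thesis using eq by (metis (no_types))
    qed
  qed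
qed

lemma card_shiftS: "g \<noteq> x \<Longrightarrow> card (shiftS g x H) = card H"
  unfolding shiftS_def by (rule card_image[OF sf_inj])

lemma shL_I: "B \<in> F \<Longrightarrow> A \<subseteq> B \<Longrightarrow> card A + l = card B \<Longrightarrow> A \<in> shL l F"
  unfolding shL_def by blast

lemma card_swap:
  assumes "finite A" "x \<in> A" "g \<notin> A"
  shows "card (insert g (A - {x})) = card A"
proof -
  have "card (insert g (A - {x})) = Suc (card (A - {x}))" using assms by simp
  also have "\<dots> = card A" using card_Suc_Diff1[OF assms(1,2)] .
  finally show ?thesis .
qed

lemma shL_shift:
  assumes fin: "\<forall>B\<in>F. finite B" and gx: "g \<noteq> x"
  shows "shL l (shiftS g x F) \<subseteq> shiftS g x (shL l F)"
proof
  fix A' assume "A' \<in> shL l (shiftS g x F)"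
  then obtain B where B: "B \<in> F" and A'B: "A' \<subseteq> sf g x F B" and cA: "card A' + l = card (sf g x F B)"
    unfolding shL_def shiftS_def by auto
  have finB: "finite B" using fin B by auto
  show "A' \<in> shiftS g x (shL l F)"
  proof (cases "x \<in> B \<and> g \<notin> B \<and> insert g (B - {x}) \<notin> F")
    case False
    then have sB: "sf g x F B = B" unfolding sf_def by auto
    have A'in: "A' \<in> shL l F" using B A'B cA sB unfolding shL_def by auto
    have "sf g x (shL l F) A' = A'"
    proof (rule ccontr)
      assume "sf g x (shL l F) A' \<noteq> A'"
      then have h: "x \<in> A'" "g \<notin> A'" "insert g (A' - {x}) \<notin> shL l F" unfolding sf_def by (auto split: if_splits)
      have xB: "x \<in> B" using h A'B sB by auto
      have finA': "finite A'" using A'B sB finB finite_subset by auto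
      have cins: "card (insert g (A' - {x})) = card A'"
        using h finA' by (intro card_swap) auto
      show False
      proof (cases "g \<in> B")
        case True
        then have "insert g (A' - {x}) \<subseteq> B" using A'B sB by auto
        moreover have "card (insert g (A' - {x})) + l = card B" using cA sB cins by simp
        ultimately have "insert g (A' - {x}) \<in> shL l F" using B by (intro shL_I)
        then show False using h by auto
      next
        case gB: False
        then have Bin: "insert g (B - {x}) \<in> F" using False xB by auto
        have "card (insert g (B - {x})) = card B" using gB xB finB by (intro card_swap) auto
        moreover have "insert g (A' - {x}) \<subseteq> insert g (B - {x})" using A'B sB by auto
        moreover have "card (insert g (A' - {x})) + l = card (insert g (B - {x}))"
          using cA sB cins calculation(1) by simp
        ultimately have "insert g (A' - {x}) \<in> shL l F" using Bin by (intro shL_I)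
        then show False using h by auto
      qed
    qed
    then show ?thesis using A'in unfolding shiftS_def by (metis image_eqI)
  next
    case True
    then have sB: "sf g x F B = insert g (B - {x})" unfolding sf_def by auto
    have cB: "card (insert g (B - {x})) = card B" using True finB by (intro card_swap) auto
    show ?thesis
    proof (cases "g \<in> A'")
      case False
      then have "A' \<subseteq> B" "x \<notin> A'" using A'B sB gx by auto
      then have A'in: "A' \<in> shL l F" using B cA sB cB unfolding shL_def by auto
      have "sf g x (shL l F) A' = A'" using \<open>x \<notin> A'\<close> unfolding sf_def by auto
      then show ?thesis using A'in unfolding shiftS_def by (metis image_eqI)
    next
      case gA: True
      define A where "A = insert x (A' - {g})"
      have xA': "x \<notin> A'" using A'B sB gx by auto
      have AB: "A \<subseteq> B" using A'B sB True unfolding A_def by auto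
      have finA': "finite A'" using A'B sB finB by (metis finite_Diff finite_insert finite_subset)
      have cA2: "card A = card A'" unfolding A_def using xA' gA finA' by (intro card_swap) auto
      have Ain: "A \<in> shL l F" using B AB cA sB cB cA2 unfolding shL_def by auto
      have bk: "insert g (A - {x}) = A'" unfolding A_def using xA' gA gx by auto
      show ?thesis
      proof (cases "A' \<in> shL l F")
        case True
        have "sf g x (shL l F) A' = A'" using gA unfolding sf_def by auto
        then show ?thesis using True unfolding shiftS_def by (metis image_eqI)
      next
        case False
        have "x \<in> A" "g \<notin> A" using xA' gx unfolding A_def by auto
        then have "sf g x (shL l F) A = A'" using False bk unfolding sf_def by auto
        then show ?thesis using Ain unfolding shiftS_def by (metis image_eqI)
      qed
    qed
  qed
qed

lemma card_shL_shift:
  assumes "finite F" "\<forall>B\<in>F. finite B" "g \<noteq> x"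
  shows "card (shL l (shiftS g x F)) \<le> card (shL l F)"
proof -
  have "card (shL l (shiftS g x F)) \<le> card (shiftS g x (shL l F))"
    using shL_shift[OF assms(2,3)] shL_finite[OF assms(1,2)]
    by (intro card_mono) (auto simp: shiftS_def)
  also have "\<dots> = card (shL l F)" using card_shiftS[OF assms(3)] .
  finally show ?thesis .
qed



lemma Efam_sub_Pow: "Efam G k s t \<subseteq> Pow G"
  unfolding Efam_def by auto

lemma Efam_finite: "finite G \<Longrightarrow> finite (Efam G k s t)"
  using Efam_sub_Pow by (metis finite_Pow_iff finite_subset)

lemma Efam_mem_finite: "finite G \<Longrightarrow> A \<in> Efam G k s t \<Longrightarrow> finite A"
  unfolding Efam_def using finite_subset by blast

lemma Efam_card: "A \<in> Efam G k s t \<Longrightarrow> card A = k"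
  unfolding Efam_def by auto

lemma Min_less:
  assumes "finite G" "x \<in> G" "x \<noteq> Min G" shows "Min G < x"
  using Min_le[OF assms(1,2)] assms(3) by (auto simp: order_less_le)

lemma swap_E:
  assumes fG: "finite G" and z: "0 \<notin> G" and A: "A \<in> Efam G k s t"
    and x: "x \<in> A" and g: "g = Min G" and gA: "g \<notin> A"
  shows "insert g (A - {x}) \<in> Efam G k s t"
proof -
  have AG: "A \<subseteq> G" and cA: "card A = k" and tA: "t \<le> card (A \<inter> {1..s})"
    using A unfolding Efam_def by auto
  have finA: "finite A" using AG fG finite_subset by blast
  have Gne: "G \<noteq> {}" using AG x by auto
  have gG: "g \<in> G" using g Min_in[OF fG Gne] by simp
  have xG: "x \<in> G" using AG x by auto
  have xg: "x \<noteq> g" using x gA by auto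
  have gx: "g < x" using Min_less[OF fG xG] xg g by simp
  have g1: "1 \<le> g" using gG z by (cases g) auto
  have c1: "card (insert g (A - {x})) = k" using card_swap[OF finA x gA] cA by simp
  have "card (A \<inter> {1..s}) \<le> card (insert g (A - {x}) \<inter> {1..s})"
  proof (cases "x \<in> {1..s}")
    case True
    then have gs: "g \<in> {1..s}" using gx g1 by auto
    have "insert g (A - {x}) \<inter> {1..s} = insert g ((A \<inter> {1..s}) - {x})" using gs by auto
    moreover have "card (insert g ((A \<inter> {1..s}) - {x})) = card (A \<inter> {1..s})"
      using True x gA finA by (intro card_swap) auto
    ultimately show ?thesis by simp
  next
    case False
    have "A \<inter> {1..s} \<subseteq> insert g (A - {x}) \<inter> {1..s}" using False by auto
    then show ?thesis using finA by (intro card_mono) auto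
  qed
  then show ?thesis unfolding Efam_def using c1 tA AG gG by auto
qed

lemma shift_pres_E:
  assumes "finite G" "0 \<notin> G" "g = Min G" "H \<subseteq> Efam G k s t"
  shows "shiftS g x H \<subseteq> Efam G k s t"
proof
  fix A' assume "A' \<in> shiftS g x H"
  then obtain A where A: "A \<in> H" and A': "A' = sf g x H A" unfolding shiftS_def by auto
  show "A' \<in> Efam G k s t"
  proof (cases "x \<in> A \<and> g \<notin> A \<and> insert g (A - {x}) \<notin> H")
    case True
    then have "A' = insert g (A - {x})" using A' unfolding sf_def by auto
    then show ?thesis using swap_E[OF assms(1,2) _ _ assms(3)] A assms(4) True by auto
  next
    case False
    then have "A' = A" using A' unfolding sf_def by auto
    then show ?thesis using A assms(4) by auto
  qed
qed

lemma exists_gshift: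
  assumes fG: "finite G" and z: "0 \<notin> G" and H: "H \<subseteq> Efam G k s t"
  shows "\<exists>H'. H' \<subseteq> Efam G k s t \<and> card H' = card H \<and> (\<forall>l. card (shL l H') \<le> card (shL l H))
           \<and> gshifted (Min G) H'"
  using H
proof (induction "card H - card {A \<in> H. Min G \<in> A}" arbitrary: H rule: less_induct)
  case less
  define g where "g = Min G"
  have finH: "finite H" using less.prems Efam_finite[OF fG] finite_subset by blast
  have finm: "\<forall>B\<in>H. finite B" using less.prems Efam_mem_finite[OF fG] by blast
  show ?case
  proof (cases "gshifted g H")
    case True
    then show ?thesis using less.prems g_def by blast
  next
    case False
    then obtain A x where A: "A \<in> H" and x: "x \<in> A" and gA: "g \<notin> A"
      and nin: "insert g (A - {x}) \<notin> H"
      unfolding gshifted_def by blast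
    have xg: "x \<noteq> g" using x gA by auto
    define H2 where "H2 = shiftS g x H"
    have H2E: "H2 \<subseteq> Efam G k s t" unfolding H2_def
      using shift_pres_E[OF fG z g_def less.prems] .
    have cH2: "card H2 = card H" unfolding H2_def using card_shiftS[of g x H] xg by simp
    have sh2: "\<forall>l. card (shL l H2) \<le> card (shL l H)"
      unfolding H2_def using card_shL_shift[OF finH finm] xg by auto
    have sub: "{A \<in> H. g \<in> A} \<subseteq> {A \<in> H2. g \<in> A}"
    proof
      fix B assume B: "B \<in> {A \<in> H. g \<in> A}"
      then have "sf g x H B = B" unfolding sf_def by auto
      then have "B \<in> H2" using B unfolding H2_def shiftS_def by (metis (no_types, lifting) image_eqI mem_Collect_eq)
      then show "B \<in> {A \<in> H2. g \<in> A}" using B by auto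
    qed
    have newin: "insert g (A - {x}) \<in> {A \<in> H2. g \<in> A}"
    proof -
      have "sf g x H A = insert g (A - {x})" using x gA nin unfolding sf_def by auto
      then have "insert g (A - {x}) \<in> H2" using A unfolding H2_def shiftS_def by (metis image_eqI)
      then show ?thesis by auto
    qed
    have finH2: "finite H2" unfolding H2_def shiftS_def using finH by auto
    have "{A \<in> H. g \<in> A} \<subset> {A \<in> H2. g \<in> A}" using sub newin nin by auto
    then have lt: "card {A \<in> H. g \<in> A} < card {A \<in> H2. g \<in> A}"
      using finH2 by (intro psubset_card_mono) auto
    have le2: "card {A \<in> H2. g \<in> A} \<le> card H2" using finH2 by (intro card_mono) auto
    have "card H2 - card {A \<in> H2. Min G \<in> A} < card H - card {A \<in> H. Min G \<in> A}"
      using lt[unfolded g_def] le2[unfolded g_def] cH2 by linarith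
    from less.hyps[OF this H2E] obtain H' where H': "H' \<subseteq> Efam G k s t" "card H' = card H2"
      "\<forall>l. card (shL l H') \<le> card (shL l H2)" "gshifted (Min G) H'"
      by blast
    show ?thesis
    proof (intro exI conjI)
      show "H' \<subseteq> Efam G k s t" using H'(1) .
      show "card H' = card H" using H'(2) cH2 by simp
      show "\<forall>l. card (shL l H') \<le> card (shL l H)" using H'(3) sh2 le_trans by blast
      show "gshifted (Min G) H'" using H'(4) .
    qed
  qed
qed



definition H0 :: "nat \<Rightarrow> nat set set \<Rightarrow> nat set set" where
  "H0 g H = {A \<in> H. g \<notin> A}"

definition H1 :: "nat \<Rightarrow> nat set set \<Rightarrow> nat set set" where
  "H1 g H = (\<lambda>A. A - {g}) ` {A \<in> H. g \<in> A}"

lemma H1_iff: "B \<in> H1 g H \<longleftrightarrow> g \<notin> B \<and> insert g B \<in> H"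
proof
  assume "B \<in> H1 g H"
  then obtain A where A: "A \<in> H" "g \<in> A" "B = A - {g}" unfolding H1_def by auto
  then have "insert g B = A" by auto
  then show "g \<notin> B \<and> insert g B \<in> H" using A by auto
next
  assume h: "g \<notin> B \<and> insert g B \<in> H"
  then have "B = insert g B - {g}" by auto
  then show "B \<in> H1 g H" unfolding H1_def using h by blast
qed

lemma card_split:
  assumes "finite H" shows "card H = card (H0 g H) + card (H1 g H)"
proof -
  have inj: "inj_on (\<lambda>A. A - {g}) {A \<in> H. g \<in> A}"
  proof (rule inj_onI)
    fix A B assume "A \<in> {A \<in> H. g \<in> A}" "B \<in> {A \<in> H. g \<in> A}" "A - {g} = B - {g}"
    then show "A = B" by (metis (no_types, lifting) insert_Diff mem_Collect_eq)
  qed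
  have "H = H0 g H \<union> {A \<in> H. g \<in> A}" unfolding H0_def by auto
  moreover have "H0 g H \<inter> {A \<in> H. g \<in> A} = {}" unfolding H0_def by auto
  ultimately have "card H = card (H0 g H) + card {A \<in> H. g \<in> A}"
    using assms by (metis (no_types, lifting) card_Un_disjoint finite_Un)
  moreover have "card (H1 g H) = card {A \<in> H. g \<in> A}" unfolding H1_def using card_image[OF inj] .
  ultimately show ?thesis by simp
qed

lemma E0_iff: "g \<notin> A \<Longrightarrow> A \<in> Efam G k s t \<longleftrightarrow> A \<in> Efam (G - {g}) k s t"
  unfolding Efam_def by auto

lemma E1_iff:
  assumes fG: "finite G" and gG: "g \<in> G" and gB: "g \<notin> B" and k: "1 \<le> k"
  shows "insert g B \<in> Efam G k s t \<longleftrightarrow>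
         B \<in> Efam (G - {g}) (k - 1) s (if g \<in> {1..s} then t - 1 else t)"
proof -
  have sub: "insert g B \<subseteq> G \<longleftrightarrow> B \<subseteq> G - {g}" using gG gB by auto
  have cnt: "card (insert g B \<inter> {1..s}) = (if g \<in> {1..s} then card (B \<inter> {1..s}) + 1 else card (B \<inter> {1..s}))"
    if "finite B"
  proof (cases "g \<in> {1..s}")
    case True
    then have "insert g B \<inter> {1..s} = insert g (B \<inter> {1..s})" by auto
    then show ?thesis using True gB that by simp
  next
    case False
    then have "insert g B \<inter> {1..s} = B \<inter> {1..s}" by auto
    then show ?thesis using False by simp
  qed
  show ?thesis
  proof
    assume h: "insert g B \<in> Efam G k s t"
    then have BG: "B \<subseteq> G - {g}" using sub unfolding Efam_def by auto
    have finB: "finite B" using BG fG finite_subset by blast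
    have "card (insert g B) = k" using h unfolding Efam_def by auto
    then have cB: "card B = k - 1" using finB gB by simp
    have "t \<le> card (insert g B \<inter> {1..s})" using h unfolding Efam_def by auto
    then have "(if g \<in> {1..s} then t - 1 else t) \<le> card (B \<inter> {1..s})" using cnt[OF finB] by (auto split: if_splits)
    then show "B \<in> Efam (G - {g}) (k - 1) s (if g \<in> {1..s} then t - 1 else t)"
      unfolding Efam_def using BG cB by auto
  next
    assume h: "B \<in> Efam (G - {g}) (k - 1) s (if g \<in> {1..s} then t - 1 else t)"
    then have BG: "B \<subseteq> G - {g}" unfolding Efam_def by auto
    have finB: "finite B" using BG fG finite_subset by blast
    have "card B = k - 1" using h unfolding Efam_def by auto
    then have cB: "card (insert g B) = k" using finB gB k by simp
    have "(if g \<in> {1..s} then t - 1 else t) \<le> card (B \<inter> {1..s})" using h unfolding Efam_def by auto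
    then have "t \<le> card (insert g B \<inter> {1..s})" using cnt[OF finB] by (auto split: if_splits)
    then show "insert g B \<in> Efam G k s t" unfolding Efam_def using BG cB gG by auto
  qed
qed

lemma shL_decomp:
  assumes fin: "finite H" and finm: "\<forall>B\<in>H. finite B" and sh: "gshifted g H" and l: "1 \<le> l"
  shows "shL l H = shL (l - 1) (H1 g H) \<union> insert g ` shL l (H1 g H)"
proof (intro equalityI subsetI)
  fix A assume "A \<in> shL l H"
  then obtain B where B: "B \<in> H" "A \<subseteq> B" "card A + l = card B" unfolding shL_def by auto
  have finB: "finite B" using finm B by auto
  show "A \<in> shL (l - 1) (H1 g H) \<union> insert g ` shL l (H1 g H)"
  proof (cases "g \<in> A")
    case True
    have gB: "g \<in> B" using True B by auto
    have "B - {g} \<in> H1 g H" using H1_iff[of "B - {g}" g H] B gB by (simp add: insert_absorb)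
    moreover have "A - {g} \<subseteq> B - {g}" using B by auto
    moreover have "card (A - {g}) + l = card (B - {g})"
    proof -
      have "finite A" using B finB finite_subset by blast
      then have "card A > 0" using True card_gt_0_iff by blast
      then show ?thesis using B True gB finB by (simp add: card_Diff_singleton_if)
    qed
    ultimately have "A - {g} \<in> shL l (H1 g H)" by (intro shL_I)
    moreover have "A = insert g (A - {g})" using True by auto
    ultimately show ?thesis by blast
  next
    case gA: False
    show ?thesis
    proof (cases "g \<in> B")
      case True
      have "B - {g} \<in> H1 g H" using H1_iff[of "B - {g}" g H] B True by (simp add: insert_absorb)
      moreover have "A \<subseteq> B - {g}" using B gA by auto
      moreover have "card A + (l - 1) = card (B - {g})" using B True finB l
        by (simp add: card_Diff_singleton_if)
      ultimately have "A \<in> shL (l - 1) (H1 g H)" by (intro shL_I)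
      then show ?thesis by blast
    next
      case gB: False
      have "card A < card B" using B l by simp
      then have "B - A \<noteq> {}" using B(2) by auto
      then obtain x where x: "x \<in> B" "x \<notin> A" by auto
      have "insert g (B - {x}) \<in> H" using sh B(1) x(1) gB unfolding gshifted_def by blast
      moreover have "g \<notin> B - {x}" using gB by auto
      ultimately have "B - {x} \<in> H1 g H" using H1_iff by blast
      moreover have "A \<subseteq> B - {x}" using B x by auto
      moreover have "card A + (l - 1) = card (B - {x})" using B x finB l
        by (simp add: card_Diff_singleton_if)
      ultimately have "A \<in> shL (l - 1) (H1 g H)" by (intro shL_I)
      then show ?thesis by blast
    qed
  qed
next
  fix A assume "A \<in> shL (l - 1) (H1 g H) \<union> insert g ` shL l (H1 g H)"
  then consider "A \<in> shL (l - 1) (H1 g H)" | A' where "A' \<in> shL l (H1 g H)" "A = insert g A'" by blast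
  then show "A \<in> shL l H"
  proof cases
    case 1
    then obtain B where B: "B \<in> H1 g H" "A \<subseteq> B" "card A + (l - 1) = card B" unfolding shL_def by auto
    have gB: "g \<notin> B" and iB: "insert g B \<in> H" using B(1) H1_iff by auto
    have finB: "finite B" using finm iB by auto
    have "card (insert g B) = card B + 1" using finB gB by simp
    then have "card A + l = card (insert g B)" using B(3) l by simp
    moreover have "A \<subseteq> insert g B" using B by auto
    ultimately show ?thesis using iB by (intro shL_I)
  next
    case 2
    then obtain B where B: "B \<in> H1 g H" "A' \<subseteq> B" "card A' + l = card B" unfolding shL_def by auto
    have gB: "g \<notin> B" and iB: "insert g B \<in> H" using B(1) H1_iff by auto
    have finB: "finite B" using finm iB by auto
    have gA': "g \<notin> A'" using gB B(2) by auto
    have finA': "finite A'" using B(2) finB finite_subset by blast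
    have "card (insert g B) = card B + 1" using finB gB by simp
    moreover have "card (insert g A') = card A' + 1" using finA' gA' by simp
    ultimately have "card (insert g A') + l = card (insert g B)" using B(3) by simp
    moreover have "insert g A' \<subseteq> insert g B" using B by auto
    ultimately show ?thesis using iB 2(2) by (intro shL_I) auto
  qed
qed

lemma card_shL_decomp:
  assumes fin: "finite H" and finm: "\<forall>B\<in>H. finite B" and sh: "gshifted g H" and l: "1 \<le> l"
  shows "card (shL l H) = card (shL (l - 1) (H1 g H)) + card (shL l (H1 g H))"
proof -
  have fin1: "finite (H1 g H)" unfolding H1_def using fin by auto
  have finm1: "\<forall>B\<in>H1 g H. finite B" unfolding H1_def using finm by auto
  have g1: "\<forall>A\<in>shL j (H1 g H). g \<notin> A" for j
    unfolding shL_def using H1_iff by blast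
  have disj: "shL (l - 1) (H1 g H) \<inter> insert g ` shL l (H1 g H) = {}" using g1 by blast
  have inj: "inj_on (insert g) (shL l (H1 g H))"
  proof (rule inj_onI)
    fix A B assume "A \<in> shL l (H1 g H)" "B \<in> shL l (H1 g H)" "insert g A = insert g B"
    then show "A = B" using g1 by (metis Diff_insert_absorb)
  qed
  have "card (shL l H) = card (shL (l - 1) (H1 g H)) + card (insert g ` shL l (H1 g H))"
    unfolding shL_decomp[OF assms] using disj shL_finite[OF fin1 finm1]
    by (intro card_Un_disjoint) auto
  also have "card (insert g ` shL l (H1 g H)) = card (shL l (H1 g H))" using card_image[OF inj] .
  finally show ?thesis .
qed

lemma shL1_H0:
  assumes finm: "\<forall>B\<in>H. finite B" and sh: "gshifted g H"
  shows "shL 1 (H0 g H) \<subseteq> H1 g H"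
proof
  fix A assume "A \<in> shL 1 (H0 g H)"
  then obtain B where B: "B \<in> H" "g \<notin> B" "A \<subseteq> B" "card A + 1 = card B"
    unfolding shL_def H0_def by auto
  have finB: "finite B" using finm B by auto
  have "B - A \<noteq> {}" using B by auto
  then obtain x where x: "x \<in> B" "x \<notin> A" by auto
  have sub: "A \<subseteq> B - {x}" using B x by auto
  have "card (B - {x}) = card A" using B x finB by (simp add: card_Diff_singleton_if)
  then have eq: "A = B - {x}" using sub finB by (metis card_subset_eq finite_Diff)
  have "insert g (B - {x}) \<in> H" using sh B x unfolding gshifted_def by blast
  then show "A \<in> H1 g H" using H1_iff eq B(2) by auto
qed



lemma colex_insert:
  assumes "finite B" "finite B'" "g \<notin> B" "g \<notin> B'" "colex_less B' B"
  shows "colex_less (insert g B') (insert g B)"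
proof -
  obtain m where m: "m \<in> B" "m \<notin> B'" "\<forall>y>m. y \<in> B' \<longleftrightarrow> y \<in> B"
    using colex_char[OF assms(2,1)] assms(5) by blast
  have "m \<in> insert g B \<and> m \<notin> insert g B' \<and> (\<forall>y>m. y \<in> insert g B' \<longleftrightarrow> y \<in> insert g B)"
    using m assms(3) by auto
  then show ?thesis using colex_char[of "insert g B'" "insert g B"] assms(1,2) by auto
qed

lemma initial_gshifted:
  assumes fG: "finite G" and z: "0 \<notin> G" and C: "initial C (Efam G k s t)"
  shows "gshifted (Min G) C"
  unfolding gshifted_def
proof (intro ballI impI)
  fix A x assume A: "A \<in> C" and x: "x \<in> A" and gA: "Min G \<notin> A"
  have AE: "A \<in> Efam G k s t" using A C unfolding initial_def by auto
  have A'E: "insert (Min G) (A - {x}) \<in> Efam G k s t" using swap_E[OF fG z AE x refl gA] .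
  have xG: "x \<in> G" using AE x unfolding Efam_def by auto
  have xg: "x \<noteq> Min G" using x gA by auto
  have gx: "Min G < x" using Min_less[OF fG xG xg] .
  have finA: "finite A" using Efam_mem_finite[OF fG AE] .
  have "x \<in> A \<and> x \<notin> insert (Min G) (A - {x}) \<and> (\<forall>y>x. y \<in> insert (Min G) (A - {x}) \<longleftrightarrow> y \<in> A)"
    using x xg gx by auto
  then have "colex_less (insert (Min G) (A - {x})) A"
    using colex_char[of "insert (Min G) (A - {x})" A] finA by auto
  then show "insert (Min G) (A - {x}) \<in> C" using C A A'E unfolding initial_def by blast
qed

lemma C1_initial:
  assumes fG: "finite G" and gG: "g \<in> G" and k: "1 \<le> k" and C: "initial C (Efam G k s t)"
  shows "initial (H1 g C) (Efam (G - {g}) (k - 1) s (if g \<in> {1..s} then t - 1 else t))"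
  unfolding initial_def
proof (intro conjI ballI impI subsetI)
  fix B assume "B \<in> H1 g C"
  then have gB: "g \<notin> B" and iB: "insert g B \<in> C" using H1_iff by auto
  then have "insert g B \<in> Efam G k s t" using C unfolding initial_def by auto
  then show "B \<in> Efam (G - {g}) (k - 1) s (if g \<in> {1..s} then t - 1 else t)"
    using E1_iff[OF fG gG gB k] by simp
next
  fix B B' assume B: "B \<in> H1 g C" and B': "B' \<in> Efam (G - {g}) (k - 1) s (if g \<in> {1..s} then t - 1 else t)"
    and lt: "colex_less B' B"
  have gB: "g \<notin> B" and iB: "insert g B \<in> C" using B H1_iff by auto
  have gB': "g \<notin> B'" using B' unfolding Efam_def by auto
  have iB'E: "insert g B' \<in> Efam G k s t" using E1_iff[OF fG gG gB' k] B' by simp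
  have iBE: "insert g B \<in> Efam G k s t" using iB C unfolding initial_def by auto
  have finB: "finite B" using Efam_mem_finite[OF fG iBE] by simp
  have finB': "finite B'" using Efam_mem_finite[OF fG iB'E] by simp
  have "colex_less (insert g B') (insert g B)" using colex_insert[OF finB finB' gB gB' lt] .
  then have "insert g B' \<in> C" using C iB iB'E unfolding initial_def by blast
  then show "B' \<in> H1 g C" using H1_iff gB' by auto
qed

lemma lemmaK:
  assumes fG: "finite G" and z: "0 \<notin> G" and g: "g = Min G" and k: "1 \<le> k"
    and C: "initial C (Efam G k s t)"
    and D: "initial D (Efam (G - {g}) k s t)"
    and As: "As \<in> D" and AsC: "As \<notin> C"
  shows "H1 g C \<subseteq> shL 1 D"
proof
  fix B assume "B \<in> H1 g C"
  then have gB: "g \<notin> B" and iB: "insert g B \<in> C" using H1_iff by auto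
  have iBE: "insert g B \<in> Efam G k s t" using iB C unfolding initial_def by auto
  have AsE0: "As \<in> Efam (G - {g}) k s t" using As D unfolding initial_def by auto
  have gAs: "g \<notin> As" using AsE0 unfolding Efam_def by auto
  have AsE: "As \<in> Efam G k s t" using AsE0 E0_iff[OF gAs] by simp
  have finiB: "finite (insert g B)" using Efam_mem_finite[OF fG iBE] .
  have finB: "finite B" using finiB by simp
  have finAs: "finite As" using Efam_mem_finite[OF fG AsE] .
  have ne: "insert g B \<noteq> As" using gAs by auto
  have "\<not> colex_less As (insert g B)" using C iB AsE AsC unfolding initial_def by blast
  then have lt: "colex_less (insert g B) As" using colex_total[OF finiB finAs ne] by blast
  then obtain m where m: "m \<in> As" "m \<notin> insert g B" "\<forall>y>m. y \<in> insert g B \<longleftrightarrow> y \<in> As"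
    using colex_char[OF finiB finAs] by blast
  have AsG: "As \<subseteq> G - {g}" using AsE0 unfolding Efam_def by auto
  have BG: "insert g B \<subseteq> G" using iBE unfolding Efam_def by auto
  define S where "S = G - insert g B"
  have finS: "finite S" unfolding S_def using fG by auto
  have mS: "m \<in> S" unfolding S_def using m AsG by auto
  define x where "x = Min S"
  have xS: "x \<in> S" unfolding x_def using Min_in[OF finS] mS by auto
  have xm: "x \<le> m" unfolding x_def using Min_le[OF finS mS] .
  have xmin: "\<And>y. y \<in> S \<Longrightarrow> x \<le> y" unfolding x_def using Min_le[OF finS] by auto
  have xG: "x \<in> G" and xB: "x \<notin> B" and xg: "x \<noteq> g" using xS unfolding S_def by auto
  have gx: "g < x" using Min_less[OF fG xG] xg g by simp
  have x1: "1 \<le> x" using xG z by (cases x) auto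
  have mG: "m \<in> G" using m AsG by auto
  have gm: "g < m" using Min_less[OF fG mG] m(2) g by auto
  define A where "A = insert x B"
  have AG: "A \<subseteq> G - {g}" unfolding A_def using BG xG xg gB by auto
  have cA: "card A = k"
  proof -
    have "card A = card B + 1" unfolding A_def using finB xB by simp
    also have "\<dots> = card (insert g B)" using finB gB by simp
    also have "\<dots> = k" using iBE unfolding Efam_def by auto
    finally show ?thesis .
  qed
  have tiB: "t \<le> card (insert g B \<inter> {1..s})" using iBE unfolding Efam_def by auto
  have tA: "t \<le> card (A \<inter> {1..s})"
  proof (cases "g \<in> {1..s} \<and> x \<notin> {1..s}")
    case True
    have "As \<inter> {1..s} \<subseteq> A \<inter> {1..s}"
    proof
      fix y assume y: "y \<in> As \<inter> {1..s}"
      have "y < x" using y True x1 by auto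
      then have "y \<notin> S" using xmin by (meson leD)
      moreover have "y \<in> G" "y \<noteq> g" using y AsG by auto
      ultimately have "y \<in> B" unfolding S_def by auto
      then show "y \<in> A \<inter> {1..s}" using y unfolding A_def by auto
    qed
    then have "card (As \<inter> {1..s}) \<le> card (A \<inter> {1..s})"
      using finB unfolding A_def by (intro card_mono) auto
    moreover have "t \<le> card (As \<inter> {1..s})" using AsE unfolding Efam_def by auto
    ultimately show ?thesis by simp
  next
    case False
    have "card (insert g B \<inter> {1..s}) \<le> card (A \<inter> {1..s})"
    proof (cases "g \<in> {1..s}")
      case True
      then have xs: "x \<in> {1..s}" using False by auto
      have "insert g B \<inter> {1..s} = insert g (B \<inter> {1..s})" using True by auto
      then have "card (insert g B \<inter> {1..s}) = card (B \<inter> {1..s}) + 1" using gB finB by simp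
      moreover have "A \<inter> {1..s} = insert x (B \<inter> {1..s})" unfolding A_def using xs by auto
      then have "card (A \<inter> {1..s}) = card (B \<inter> {1..s}) + 1" using xB finB by simp
      ultimately show ?thesis by simp
    next
      case gs: False
      have "insert g B \<inter> {1..s} \<subseteq> A \<inter> {1..s}" unfolding A_def using gs by auto
      then show ?thesis using finB unfolding A_def by (intro card_mono) auto
    qed
    then show ?thesis using tiB by simp
  qed
  have AE0: "A \<in> Efam (G - {g}) k s t" unfolding Efam_def using AG cA tA by auto
  have finA: "finite A" unfolding A_def using finB by simp
  have "A \<in> D"
  proof (cases "x = m")
    case True
    have "As \<subseteq> A"
    proof
      fix y assume y: "y \<in> As"
      consider "m < y" | "y = m" | "y < m" by linarith
      then show "y \<in> A"
      proof cases
        case 1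
        then have "y \<in> insert g B" using m(3) y by blast
        moreover have "y \<noteq> g" using 1 gm by auto
        ultimately show ?thesis unfolding A_def by auto
      next
        case 2 then show ?thesis unfolding A_def using True by auto
      next
        case 3
        then have "y \<notin> S" using xmin True by (meson leD)
        moreover have "y \<in> G" "y \<noteq> g" using y AsG by auto
        ultimately have "y \<in> B" unfolding S_def by auto
        then show ?thesis unfolding A_def by auto
      qed
    qed
    moreover have "card As = card A" using cA AsE unfolding Efam_def by auto
    ultimately have "As = A" using finA by (metis card_subset_eq)
    then show ?thesis using As by simp
  next
    case False
    then have xm': "x < m" using xm by simp
    have "m \<in> As \<and> m \<notin> A \<and> (\<forall>y>m. y \<in> A \<longleftrightarrow> y \<in> As)"
    proof (intro conjI allI impI)
      show "m \<in> As" using m by simp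
      show "m \<notin> A" unfolding A_def using m(2) False by auto
      fix y assume ym: "m < y"
      have "y \<in> A \<longleftrightarrow> y \<in> B" unfolding A_def using ym xm' by auto
      also have "\<dots> \<longleftrightarrow> y \<in> insert g B" using ym gm by auto
      also have "\<dots> \<longleftrightarrow> y \<in> As" using m(3) ym by blast
      finally show "y \<in> A \<longleftrightarrow> y \<in> As" .
    qed
    then have "colex_less A As" using colex_char[OF finA finAs] by blast
    then show ?thesis using D As AE0 unfolding initial_def by blast
  qed
  moreover have "B \<subseteq> A" unfolding A_def by auto
  moreover have "card B + 1 = card A" unfolding A_def using finB xB by simp
  ultimately show "B \<in> shL 1 D" by (intro shL_I)
qed



lemma Efam_finm: "finite G \<Longrightarrow> \<forall>B\<in>Efam G k s t. finite B"
  using Efam_mem_finite by blast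

lemma main:
  assumes "finite G" "0 \<notin> G" "H \<subseteq> Efam G k s t"
  shows "card (shL l (colex_initial (card H) (Efam G k s t))) \<le> card (shL l H)"
  using assms
proof (induction "card G" arbitrary: G k s t l H rule: less_induct)
  case less
  note fG = less.prems(1) and z = less.prems(2) and HE = less.prems(3)
  define E where "E = Efam G k s t"
  have finE: "finite E" unfolding E_def using Efam_finite[OF fG] .
  have finmE: "\<forall>B\<in>E. finite B" unfolding E_def using Efam_finm[OF fG] .
  have finH: "finite H" using HE finE finite_subset unfolding E_def by blast
  have mle: "card H \<le> card E" using HE finE unfolding E_def by (intro card_mono) auto
  show ?case
  proof (cases "l = 0")
    case True
    have "shL l (colex_initial (card H) E) = colex_initial (card H) E"
      using True shL_0 finmE L_subset by (metis subsetD)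
    moreover have "shL l H = H" using True shL_0 finmE HE unfolding E_def by (metis subsetD)
    ultimately show ?thesis using card_L[OF finE finmE mle] unfolding E_def by simp
  next
    case l0: False
    show ?thesis
    proof (cases "k = 0 \<or> G = {}")
      case True
      have "shL l E = {}"
      proof -
        have "card B = 0" if "B \<in> E" for B
          using True that unfolding E_def Efam_def by auto
        then show ?thesis unfolding shL_def using l0 by fastforce
      qed
      then have "shL l (colex_initial (card H) E) = {}" using shL_mono[OF L_subset] by blast
      then show ?thesis unfolding E_def by simp
    next
      case False
      then have k1: "1 \<le> k" and Gne: "G \<noteq> {}" by auto
      define g where "g = Min G"
      define G' where "G' = G - {g}"
      define t' where "t' = (if g \<in> {1..s} then t - 1 else t)"
      define E0 where "E0 = Efam G' k s t"
      define E1 where "E1 = Efam G' (k - 1) s t'"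
      have gG: "g \<in> G" unfolding g_def using Min_in[OF fG Gne] .
      have cG': "card G' < card G" unfolding G'_def using fG gG by (metis card_Diff1_less)
      have fG': "finite G'" unfolding G'_def using fG by simp
      have z': "0 \<notin> G'" unfolding G'_def using z by simp
      have finE0: "finite E0" and finmE0: "\<forall>B\<in>E0. finite B"
        unfolding E0_def using Efam_finite[OF fG'] Efam_finm[OF fG'] by auto
      have finE1: "finite E1" and finmE1: "\<forall>B\<in>E1. finite B"
        unfolding E1_def using Efam_finite[OF fG'] Efam_finm[OF fG'] by auto
      obtain H' where H'E: "H' \<subseteq> E" and cH': "card H' = card H"
        and shH': "\<forall>l. card (shL l H') \<le> card (shL l H)" and gsH': "gshifted g H'"
        using exists_gshift[OF fG z HE] unfolding E_def g_def by blast
      have finH': "finite H'" using H'E finE finite_subset by blast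
      have finmH': "\<forall>B\<in>H'. finite B" using H'E finmE by blast
      define C where "C = colex_initial (card H) E"
      have initC: "initial C E" unfolding C_def using initial_L[OF finE finmE] .
      have CE: "C \<subseteq> E" unfolding C_def using L_subset .
      have cC: "card C = card H" unfolding C_def using card_L[OF finE finmE mle] .
      have gsC: "gshifted g C" using initial_gshifted[OF fG z] initC unfolding E_def g_def by blast
      have finC: "finite C" using CE finE finite_subset by blast
      have finmC: "\<forall>B\<in>C. finite B" using CE finmE by blast
      have l1: "1 \<le> l" using l0 by simp
      have dC: "card (shL l C) = card (shL (l - 1) (H1 g C)) + card (shL l (H1 g C))"
        using card_shL_decomp[OF finC finmC gsC l1] .
      have dH: "card (shL l H') = card (shL (l - 1) (H1 g H')) + card (shL l (H1 g H'))"
        using card_shL_decomp[OF finH' finmH' gsH' l1] .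
      have initC1: "initial (H1 g C) E1"
        unfolding E1_def G'_def t'_def using C1_initial[OF fG gG k1] initC unfolding E_def by blast
      have C1eq: "H1 g C = colex_initial (card (H1 g C)) E1"
        using initial_eq_L[OF finE1 finmE1 initC1] .
      have H1E1: "H1 g H' \<subseteq> E1"
      proof
        fix B assume "B \<in> H1 g H'"
        then have gB: "g \<notin> B" and iB: "insert g B \<in> H'" using H1_iff by auto
        then have "insert g B \<in> Efam G k s t" using H'E unfolding E_def by auto
        then show "B \<in> E1" unfolding E1_def G'_def t'_def using E1_iff[OF fG gG gB k1] by simp
      qed
      have H0E0: "H0 g H' \<subseteq> E0"
      proof
        fix A assume "A \<in> H0 g H'"
        then have "A \<in> H'" "g \<notin> A" unfolding H0_def by auto
        then show "A \<in> E0" unfolding E0_def G'_def using E0_iff H'E unfolding E_def by blast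
      qed
      have IH1: "card (shL j (colex_initial (card (H1 g H')) E1)) \<le> card (shL j (H1 g H'))" for j
        using less.hyps[OF cG' fG' z'] H1E1 unfolding E1_def by blast
      have IH0: "card (shL 1 (colex_initial (card (H0 g H')) E0)) \<le> card (shL 1 (H0 g H'))"
        using less.hyps[OF cG' fG' z'] H0E0 unfolding E0_def by blast
      have finH1': "finite (H1 g H')" unfolding H1_def using finH' by simp
      have claim: "card (H1 g C) \<le> card (H1 g H')"
      proof (cases "card (H0 g H') \<le> card (H0 g C)")
        case True
        have "card C = card (H0 g C) + card (H1 g C)" using card_split[OF finC] .
        moreover have "card H' = card (H0 g H') + card (H1 g H')" using card_split[OF finH'] .
        ultimately show ?thesis using True cC cH' by linarith
      next
        case False
        define D where "D = colex_initial (card (H0 g H')) E0"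
        have H0le: "card (H0 g H') \<le> card E0" using H0E0 finE0 by (intro card_mono)
        have cD: "card D = card (H0 g H')" unfolding D_def using card_L[OF finE0 finmE0 H0le] .
        have initD: "initial D E0" unfolding D_def using initial_L[OF finE0 finmE0] .
        have finH0C: "finite (H0 g C)" unfolding H0_def using finC by simp
        have "\<not> D \<subseteq> H0 g C"
        proof
          assume "D \<subseteq> H0 g C"
          then have "card D \<le> card (H0 g C)" using finH0C by (intro card_mono)
          then show False using cD False by simp
        qed
        then obtain As where As: "As \<in> D" "As \<notin> H0 g C" by blast
        have "As \<in> E0" using As initD unfolding initial_def by auto
        then have "g \<notin> As" unfolding E0_def G'_def Efam_def by auto
        then have AsC: "As \<notin> C" using As unfolding H0_def by auto
        have K: "H1 g C \<subseteq> shL 1 D"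
          using lemmaK[OF fG z g_def k1 _ _ As(1) AsC] initC initD unfolding E_def E0_def G'_def by blast
        have finD: "finite D" unfolding D_def using finE0 L_subset finite_subset by blast
        have finmD: "\<forall>B\<in>D. finite B" unfolding D_def using finmE0 L_subset by blast
        have "card (H1 g C) \<le> card (shL 1 D)" using K shL_finite[OF finD finmD] by (intro card_mono)
        also have "\<dots> \<le> card (shL 1 (H0 g H'))" using IH0 unfolding D_def .
        also have "\<dots> \<le> card (H1 g H')"
          using shL1_H0[OF finmH' gsH'] finH1' by (intro card_mono)
        finally show ?thesis .
      qed
      have mono: "card (shL j (H1 g C)) \<le> card (shL j (H1 g H'))" for j
      proof -
        have "H1 g C \<subseteq> colex_initial (card (H1 g H')) E1"
          using C1eq L_mono[OF claim] by (metis)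
        then have "shL j (H1 g C) \<subseteq> shL j (colex_initial (card (H1 g H')) E1)" by (rule shL_mono)
        moreover have "finite (shL j (colex_initial (card (H1 g H')) E1))"
        proof (rule shL_finite)
          show "finite (colex_initial (card (H1 g H')) E1)"
            using finE1 L_subset finite_subset by blast
          show "\<forall>B\<in>colex_initial (card (H1 g H')) E1. finite B" using finmE1 L_subset by blast
        qed
        ultimately have "card (shL j (H1 g C)) \<le> card (shL j (colex_initial (card (H1 g H')) E1))"
          by (intro card_mono)
        also have "\<dots> \<le> card (shL j (H1 g H'))" using IH1 .
        finally show ?thesis .
      qed
      have "card (shL l C) \<le> card (shL l H')" using dC dH mono[of "l - 1"] mono[of l] by linarith
      also have "\<dots> \<le> card (shL l H)" using shH' by blast
      finally show ?thesis unfolding C_def E_def .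
    qed
  qed
qed


theorem corollary2p6:
  fixes n k s t l m :: nat and H :: "nat set set"
  assumes "n \<ge> k" and "s \<ge> t" and "1 \<le> l" and "l \<le> k - 1"
    and "H \<subseteq> EM n k s t" and "card H = m"
  shows "card (shadow k l H) \<ge> card (shadow k l (colex_initial m (EM n k s t)))"
proof -
  have EMeq: "EM n k s t = Efam {1..n} k s t" unfolding EM_def ksubsets_def Efam_def by auto
  have lk: "l \<le> k" using assms(3,4) by arith
  have sheq: "shadow k l F = shL l F" if F: "F \<subseteq> EM n k s t" for F
  proof (intro set_eqI iffI)
    fix A assume "A \<in> shadow k l F"
    then obtain B where B: "B \<in> F" "A \<subseteq> B" "card A = k - l" unfolding shadow_def by auto
    have "card B = k" using B F unfolding EM_def ksubsets_def by auto
    then show "A \<in> shL l F" using B lk by (intro shL_I) auto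
  next
    fix A assume "A \<in> shL l F"
    then obtain B where B: "B \<in> F" "A \<subseteq> B" "card A + l = card B" unfolding shL_def by auto
    have BS: "B \<subseteq> {1..n}" "card B = k" using B F unfolding EM_def ksubsets_def by auto
    have "finite B" using BS(1) finite_subset by blast
    note BS = BS this
    then show "A \<in> shadow k l F" using B BS unfolding shadow_def by (auto intro: finite_subset)
  qed
  have "card (shL l (colex_initial (card H) (Efam {1..n} k s t))) \<le> card (shL l H)"
    using main[of "{1..n}" H k s t l] assms(5) EMeq by auto
  moreover have "colex_initial m (EM n k s t) \<subseteq> EM n k s t" using L_subset .
  ultimately show ?thesis using sheq[OF assms(5)] sheq[of "colex_initial m (EM n k s t)"] assms(6) EMeq
    by simp
qed

end
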